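(* Let $\mathcal{H}$ be a real Hilbert space, $A_1:\mathcal{H}\to\mathcal{H}$ monotone and $L$-Lipschitz, and $A_2:\mathcal{H}\rightrightarrows\mathcal{H}$ maximally $\mu$-strongly monotone. Let $\Gamma\subseteq\mathbb{R}_{++}$ be a nonempty closed interval and $T_\gamma:=\mathrm{Id}-J_{\gamma A_1}+J_{\gamma A_2}(2J_{\gamma A_1}-\mathrm{Id})$ for $\gamma\in\Gamma$. Then there exists $\beta\in[0,1)$ such that every $T_\gamma$, $\gamma\in\Gamma$, is a $\beta$-contraction.
   Context: $J_A=(\mathrm{Id}+A)^{-1}$. $A_2$ is $\mu$-strongly monotone if $\langle x-y,u-v\rangle\ge\mu\|x-y\|^2$ for all $(x,u),(y,v)\in\operatorname{gra}A_2$. A $\beta$-contraction satisfies $\|Tx-Ty\|\le\beta\|x-y\|$ for all $x,y$. *)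

theory Defs
  imports "HOL-Analysis.Analysis"
begin

text \<open>Set-valued operators on a real Hilbert space are modelled as functions
  'a => 'a set (A x is the set of values at x; gra A = {(x,u). u in A x}).\<close>

definition monotone_op :: "('a::real_inner \<Rightarrow> 'a set) \<Rightarrow> bool" where
  "monotone_op A \<longleftrightarrow>
     (\<forall>x y u v. u \<in> A x \<longrightarrow> v \<in> A y \<longrightarrow> inner (x - y) (u - v) \<ge> 0)"

definition strongly_monotone_op :: "real \<Rightarrow> ('a::real_inner \<Rightarrow> 'a set) \<Rightarrow> bool" where
  "strongly_monotone_op \<mu> A \<longleftrightarrow>
     (\<forall>x y u v. u \<in> A x \<longrightarrow> v \<in> A y \<longrightarrow> inner (x - y) (u - v) \<ge> \<mu> * (norm (x - y))\<^sup>2)"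

definition maximally_monotone_op :: "('a::real_inner \<Rightarrow> 'a set) \<Rightarrow> bool" where
  "maximally_monotone_op A \<longleftrightarrow> monotone_op A \<and>
     (\<forall>B. monotone_op B \<and> (\<forall>x. A x \<subseteq> B x) \<longrightarrow> B = A)"

text \<open>Resolvent J_{gamma A} = (Id + gamma A)^{-1}; its value at x is the unique p with
  x in p + gamma A p (single-valued and total for maximally monotone A, gamma > 0).\<close>
definition resolvent :: "real \<Rightarrow> ('a::real_inner \<Rightarrow> 'a set) \<Rightarrow> 'a \<Rightarrow> 'a" where
  "resolvent \<gamma> A x = (THE p. x - p \<in> (\<lambda>u. \<gamma> *\<^sub>R u) ` A p)"

definition is_contraction :: "real \<Rightarrow> ('a::real_normed_vector \<Rightarrow> 'a) \<Rightarrow> bool" where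
  "is_contraction \<beta> T \<longleftrightarrow> (\<forall>x y. norm (T x - T y) \<le> \<beta> * norm (x - y))"

end

theory Submission imports Defs begin

lemma key_alg:
  fixes dp da dq :: "'a::real_inner"
  assumes g: "0 < g" "a \<le> g" "g \<le> b" and a: "0 < a" and mu: "0 < mu" and L: "0 \<le> L"
    and h1: "inner dp da \<ge> 0" and h2: "norm da \<le> L * norm dp"
    and h3: "inner dq (dp - g *\<^sub>R da - dq) \<ge> g * mu * (norm dq)\<^sup>2"
  defines "K \<equiv> (1 + b * L)\<^sup>2 * (2 + 1 / (a * mu))"
  shows "(norm (g *\<^sub>R da + dq))\<^sup>2 \<le> (1 - 1 / K) * (norm (dp + g *\<^sub>R da))\<^sup>2"
proof -
  define s where "s = (norm (dp - dq))\<^sup>2 + 2 * g * mu * (norm dq)\<^sup>2"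
  have ident: "(norm (dp + g *\<^sub>R da))\<^sup>2 = (norm (g *\<^sub>R da + dq))\<^sup>2 + (norm (dp - dq))\<^sup>2
      + 2 * inner dq (dp - g *\<^sub>R da - dq) + 2 * g * inner da dp"
    by (simp add: power2_norm_eq_inner inner_add_left inner_add_right inner_diff_left inner_diff_right
        inner_commute algebra_simps)
  have X_ge: "(norm (dp + g *\<^sub>R da))\<^sup>2 \<ge> (norm (g *\<^sub>R da + dq))\<^sup>2 + s"
  proof -
    have "g * inner da dp \<ge> 0" using h1 g(1) by (simp add: inner_commute)
    thus ?thesis using ident h3 unfolding s_def by (simp add: algebra_simps)
  qed
  have n1: "norm (dp + g *\<^sub>R da) \<le> (1 + b * L) * norm dp"
  proof -
    have "norm (dp + g *\<^sub>R da) \<le> norm dp + g * norm da"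
      using norm_triangle_ineq[of dp "g *\<^sub>R da"] g(1) by simp
    also have "\<dots> \<le> norm dp + b * (L * norm dp)"
      using h2 g by (intro add_left_mono mult_mono) auto
    finally show ?thesis by (simp add: algebra_simps)
  qed
  have n1sq: "(norm (dp + g *\<^sub>R da))\<^sup>2 \<le> (1 + b * L)\<^sup>2 * (norm dp)\<^sup>2"
    using power_mono[OF n1] by (simp add: power_mult_distrib)
  have dqb: "(norm dq)\<^sup>2 \<le> s / (2 * a * mu)"
  proof -
    have "2 * a * mu * (norm dq)\<^sup>2 \<le> 2 * g * mu * (norm dq)\<^sup>2"
      using g mu by (intro mult_right_mono) auto
    also have "\<dots> \<le> s" unfolding s_def by simp
    finally show ?thesis using a mu by (simp add: field_simps)
  qed
  have dpb: "(norm dp)\<^sup>2 \<le> 2 * (norm (dp - dq))\<^sup>2 + 2 * (norm dq)\<^sup>2"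
  proof -
    have "norm dp \<le> norm (dp - dq) + norm dq" using norm_triangle_ineq[of "dp - dq" dq] by simp
    hence "(norm dp)\<^sup>2 \<le> (norm (dp - dq) + norm dq)\<^sup>2" by (simp add: power_mono)
    also have "\<dots> \<le> 2 * (norm (dp - dq))\<^sup>2 + 2 * (norm dq)\<^sup>2"
      by (smt (verit) power2_sum sum_squares_bound)
    finally show ?thesis .
  qed
  have "(norm (dp - dq))\<^sup>2 \<le> s" unfolding s_def using g mu by simp
  moreover have "2 * (norm dq)\<^sup>2 \<le> s / (a * mu)"
  proof -
    have "2 * (norm dq)\<^sup>2 \<le> 2 * (s / (2 * a * mu))" using dqb by simp
    also have "\<dots> = s / (a * mu)" by simp
    finally show ?thesis .
  qed
  ultimately have "(norm dp)\<^sup>2 \<le> 2 * s + s / (a * mu)" using dpb by linarith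
  moreover have "2 * s + s / (a * mu) = (2 + 1 / (a * mu)) * s" by (simp add: algebra_simps)
  ultimately have dps: "(norm dp)\<^sup>2 \<le> (2 + 1 / (a * mu)) * s" by simp
  have s0: "s \<ge> 0" unfolding s_def using g mu by simp
  have Xs: "(norm (dp + g *\<^sub>R da))\<^sup>2 \<le> K * s"
    unfolding K_def using n1sq mult_left_mono[OF dps, of "(1 + b * L)\<^sup>2"]
    by (simp add: mult.assoc)
  have K1: "K \<ge> 1"
  proof -
    have "(1 + b * L)\<^sup>2 \<ge> 1" using a g L by (simp add: one_le_power)
    moreover have "2 + 1 / (a * mu) \<ge> 1" using a mu by simp
    ultimately have "1 * 1 \<le> (1 + b * L)\<^sup>2 * (2 + 1 / (a * mu))" by (intro mult_mono) auto
    thus ?thesis unfolding K_def by simp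
  qed
  have "(norm (dp + g *\<^sub>R da))\<^sup>2 / K \<le> s" using Xs K1 by (simp add: field_simps)
  thus ?thesis using X_ge K1 by (simp add: algebra_simps)
qed

lemma small_t:
  fixes a D :: real
  assumes D: "D \<ge> 0" and h: "\<And>t. 0 < t \<Longrightarrow> t \<le> 1 \<Longrightarrow> 0 \<le> t * a + t\<^sup>2 * D"
  shows "a \<ge> 0"
proof (rule ccontr)
  assume "\<not> a \<ge> 0" hence a: "a < 0" by simp
  define t where "t = min 1 (- a / (2 * (D + 1)))"
  have t0: "0 < t" using a D unfolding t_def by (simp add: field_simps)
  have t1: "t \<le> 1" unfolding t_def by simp
  have "t * D \<le> (- a / (2 * (D + 1))) * D" unfolding t_def using D by (intro mult_right_mono) auto
  also have "\<dots> \<le> - a / 2" using a D by (simp add: field_simps)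
  finally have "a + t * D < 0" using a by simp
  hence "t * (a + t * D) < 0" using t0 by (simp add: mult_pos_neg)
  moreover have "0 \<le> t * (a + t * D)" using h[OF t0 t1] by (simp add: algebra_simps power2_eq_square)
  ultimately show False by simp
qed

lemma minty_core:
  fixes G :: "('a::{real_inner,complete_space} \<times> 'a) set"
  assumes mono: "\<And>y v y' v'. (y,v) \<in> G \<Longrightarrow> (y',v') \<in> G \<Longrightarrow> inner (y - y') (v - v') \<ge> 0"
    and ext: "\<And>x u. (\<And>y v. (y,v) \<in> G \<Longrightarrow> inner (x - y) (u - v) \<ge> 0) \<Longrightarrow> (x,u) \<in> G"
  shows "\<exists>x. (x, -x) \<in> G"
proof -
  define P where "P x u f \<longleftrightarrow> (\<forall>y v. (y,v) \<in> G \<longrightarrow> inner x v + inner y u - inner y v \<le> f)"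
    for x u :: 'a and f :: real
  define q where "q x u = ((norm x)\<^sup>2 + (norm u)\<^sup>2) / 2" for x u :: 'a
  have lower: "inner x u \<le> f" if "P x u f" for x u f
  proof (rule ccontr)
    assume "\<not> inner x u \<le> f"
    hence "(x,u) \<in> G"
      using that unfolding P_def
      by (intro ext) (smt (verit, best) inner_diff_left inner_diff_right inner_commute)
    hence "inner x u + inner x u - inner x u \<le> f" using that unfolding P_def by blast
    thus False using \<open>\<not> inner x u \<le> f\<close> by simp
  qed
  have lowq: "f + q x u \<ge> 0" if "P x u f" for x u f
  proof -
    have "0 \<le> (norm (x + u))\<^sup>2 / 2" by simp
    also have "\<dots> = inner x u + q x u"
      unfolding q_def by (simp add: power2_norm_eq_inner inner_add_left inner_add_right inner_commute[of u x] field_simps)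
    finally show ?thesis using lower[OF that] by simp
  qed
  have Pg: "P y v (inner y v)" if "(y,v) \<in> G" for y v
    unfolding P_def
  proof (intro allI impI)
    fix y' v' assume "(y',v') \<in> G"
    from mono[OF that this] show "inner y v' + inner y' v - inner y' v' \<le> inner y v"
      by (simp add: inner_diff_left inner_diff_right inner_commute)
  qed
  have conv: "P ((1 - t) *\<^sub>R x + t *\<^sub>R x') ((1 - t) *\<^sub>R u + t *\<^sub>R u') ((1 - t) * f + t * f')"
    if "P x u f" "P x' u' f'" "0 \<le> t" "t \<le> 1" for x u f x' u' f' t
    unfolding P_def
  proof (intro allI impI)
    fix y v assume yv: "(y,v) \<in> G"
    have e1: "inner x v + inner y u - inner y v \<le> f" using that(1) yv unfolding P_def by auto
    have e2: "inner x' v + inner y u' - inner y v \<le> f'" using that(2) yv unfolding P_def by auto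
    have "inner ((1 - t) *\<^sub>R x + t *\<^sub>R x') v + inner y ((1 - t) *\<^sub>R u + t *\<^sub>R u') - inner y v
        = (1 - t) * (inner x v + inner y u - inner y v) + t * (inner x' v + inner y u' - inner y v)"
      by (simp add: inner_add_left inner_add_right algebra_simps)
    also have "\<dots> \<le> (1 - t) * f + t * f'"
      using e1 e2 that(3,4) by (intro add_mono mult_left_mono) auto
    finally show "inner ((1 - t) *\<^sub>R x + t *\<^sub>R x') v + inner y ((1 - t) *\<^sub>R u + t *\<^sub>R u') - inner y v
        \<le> (1 - t) * f + t * f'" .
  qed
  obtain y0 v0 where yv0: "(y0, v0) \<in> G"
  proof (cases "G = {}")
    case True
    hence "(0,0) \<in> G" by (intro ext) auto
    thus ?thesis using that by blast
  next
    case False thus ?thesis using that by auto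
  qed
  define S where "S = {c. \<exists>x u f. P x u f \<and> c = f + q x u}"
  define m where "m = Inf S"
  have Sne: "S \<noteq> {}" using Pg[OF yv0] unfolding S_def by blast
  have Sbdd: "bdd_below S" unfolding S_def bdd_below_def using lowq by blast
  have mle: "m \<le> f + q x u" if "P x u f" for x u f
    unfolding m_def using Sbdd that by (intro cInf_lower) (auto simp: S_def)
  have "\<exists>x u f. P x u f \<and> f + q x u < m + 1 / real (Suc n)" for n
  proof -
    have "Inf S < m + 1 / real (Suc n)" unfolding m_def by simp
    then obtain c where "c \<in> S" "c < m + 1 / real (Suc n)" using cInf_lessD[OF Sne] by blast
    thus ?thesis unfolding S_def by blast
  qed
  then obtain X U F where XUF: "\<And>n. P (X n) (U n) (F n)" "\<And>n. F n + q (X n) (U n) < m + 1 / real (Suc n)"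
    by metis
  have cauchy_bd: "(norm (X n - X k))\<^sup>2 + (norm (U n - U k))\<^sup>2 \<le> 4 * (1 / real (Suc n) + 1 / real (Suc k))" for n k
  proof -
    have Pm: "P ((1 - 1/2) *\<^sub>R X n + (1/2) *\<^sub>R X k) ((1 - 1/2) *\<^sub>R U n + (1/2) *\<^sub>R U k) ((1 - 1/2) * F n + (1/2) * F k)"
      by (rule conv[OF XUF(1) XUF(1)]) auto
    have par: "q ((1 - 1/2) *\<^sub>R x + (1/2) *\<^sub>R x') ((1 - 1/2) *\<^sub>R u + (1/2) *\<^sub>R u')
        = (q x u + q x' u') / 2 - ((norm (x - x'))\<^sup>2 + (norm (u - u'))\<^sup>2) / 8" for x x' u u' :: 'a
      unfolding q_def
      by (simp add: power2_norm_eq_inner inner_add_left inner_add_right inner_diff_left inner_diff_right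
          inner_commute[of x' x] inner_commute[of u' u] field_simps)
    have "m \<le> ((1 - 1/2) * F n + (1/2) * F k) + q ((1 - 1/2) *\<^sub>R X n + (1/2) *\<^sub>R X k) ((1 - 1/2) *\<^sub>R U n + (1/2) *\<^sub>R U k)"
      by (rule mle[OF Pm])
    hence hh: "m \<le> F n / 2 + F k / 2 + ((q (X n) (U n) + q (X k) (U k)) / 2 -
           ((norm (X n - X k))\<^sup>2 + (norm (U n - U k))\<^sup>2) / 8)" unfolding par by simp
    have aux: "D \<le> 4*(A+B)" if "mm \<le> Fn/2+Fk/2+((qn+qk)/2 - D/8)"
       "Fn+qn < mm + A" "Fk + qk < mm + B" for A B D mm Fn Fk qn qk :: real using that by argo
    show ?thesis by (rule aux[OF hh XUF(2)[of n] XUF(2)[of k]])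
  qed
  have inv0: "(\<lambda>n. 1 / real (Suc n)) \<longlonglongrightarrow> 0" by (rule LIMSEQ_Suc[OF lim_inverse_n'])
  have Cauchy_gen: "Cauchy Z" if Zb: "\<And>n k. (norm (Z n - Z k))\<^sup>2 \<le> 4 * (1 / real (Suc n) + 1 / real (Suc k))"
    for Z :: "nat \<Rightarrow> 'a"
  proof (rule metric_CauchyI)
    fix e :: real assume e: "0 < e"
    obtain N :: nat where N: "8 / e\<^sup>2 < real N" using reals_Archimedean2 by blast
    show "\<exists>M. \<forall>m\<ge>M. \<forall>n\<ge>M. dist (Z m) (Z n) < e"
    proof (intro exI allI impI)
      fix n k assume nk: "N \<le> n" "N \<le> k"
      have "1 / real (Suc n) \<le> 1 / real (Suc N)" using nk by (simp add: frac_le)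
      moreover have "1 / real (Suc k) \<le> 1 / real (Suc N)" using nk by (simp add: frac_le)
      moreover have "8 * (1 / real (Suc N)) < e\<^sup>2"
        using N e by (simp add: field_simps) (smt (verit) zero_less_power)
      moreover have aux2: "Dz < E" if "Dz \<le> 4*(a1+b1)" "a1 \<le> c" "b1 \<le> c" "8*c < E" for Dz E a1 b1 c :: real
        using that by argo
      ultimately have "(norm (Z n - Z k))\<^sup>2 < e\<^sup>2" using Zb[of n k] by (metis aux2)
      hence "norm (Z n - Z k) < e" using e by (simp add: power_less_imp_less_base)
      thus "dist (Z n) (Z k) < e" by (simp add: dist_norm)
    qed
  qed
  have "Cauchy X" by (rule Cauchy_gen) (smt (verit) cauchy_bd zero_le_power2)
  then obtain x0 where x0: "X \<longlonglongrightarrow> x0" using Cauchy_convergent_iff convergent_def by blast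
  have "Cauchy U" by (rule Cauchy_gen) (smt (verit) cauchy_bd zero_le_power2)
  then obtain u0 where u0: "U \<longlonglongrightarrow> u0" using Cauchy_convergent_iff convergent_def by blast
  define f0 where "f0 = m - q x0 u0"
  have P0: "P x0 u0 f0" unfolding P_def
  proof (intro allI impI)
    fix y v assume yv: "(y,v) \<in> G"
    have le: "inner (X n) v + inner y (U n) - inner y v \<le> m + 1 / real (Suc n) - q (X n) (U n)" for n
      using XUF(1)[of n] XUF(2)[of n] yv unfolding P_def by fastforce
    have l1: "(\<lambda>n. inner (X n) v + inner y (U n) - inner y v) \<longlonglongrightarrow> inner x0 v + inner y u0 - inner y v"
      using x0 u0 by (intro tendsto_intros)
    have l2: "(\<lambda>n. m + 1 / real (Suc n) - q (X n) (U n)) \<longlonglongrightarrow> m + 0 - q x0 u0"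
      unfolding q_def using x0 u0 inv0 by (intro tendsto_intros) auto
    show "inner x0 v + inner y u0 - inner y v \<le> f0"
      using LIMSEQ_le[OF l1 l2] le unfolding f0_def by auto
  qed
  have var: "inner y v - f0 + inner x0 (y - x0) + inner u0 (v - u0) \<ge> 0" if yv: "(y,v) \<in> G" for y v
  proof (rule small_t)
    show "0 \<le> ((norm (y - x0))\<^sup>2 + (norm (v - u0))\<^sup>2) / 2" by simp
    fix t :: real assume t: "0 < t" "t \<le> 1"
    have "m \<le> ((1 - t) * f0 + t * inner y v) + q ((1 - t) *\<^sub>R x0 + t *\<^sub>R y) ((1 - t) *\<^sub>R u0 + t *\<^sub>R v)"
      using mle[OF conv[OF P0 Pg[OF yv]]] t by simp
    moreover have "q ((1 - t) *\<^sub>R x0 + t *\<^sub>R y) ((1 - t) *\<^sub>R u0 + t *\<^sub>R v)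
       = q x0 u0 + t * (inner x0 (y - x0) + inner u0 (v - u0)) + t\<^sup>2 * (((norm (y - x0))\<^sup>2 + (norm (v - u0))\<^sup>2) / 2)"
    proof -
      have e: "(1 - t) *\<^sub>R x0 + t *\<^sub>R y = x0 + t *\<^sub>R (y - x0)" "(1 - t) *\<^sub>R u0 + t *\<^sub>R v = u0 + t *\<^sub>R (v - u0)"
        by (simp_all add: algebra_simps)
      have nq: "(norm (aa + t *\<^sub>R d))\<^sup>2 = (norm aa)\<^sup>2 + 2 * t * inner aa d + t\<^sup>2 * (norm d)\<^sup>2" for aa d :: 'a
        unfolding power2_norm_eq_inner by (simp add: inner_add_left inner_add_right inner_commute[of d aa] power2_eq_square algebra_simps)
      have qq: "q (aa + t *\<^sub>R d) (bb + t *\<^sub>R d') = q aa bb + t * (inner aa d + inner bb d')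
           + t\<^sup>2 * (((norm d)\<^sup>2 + (norm d')\<^sup>2) / 2)" for aa bb d d' :: 'a
        unfolding q_def nq by (simp add: field_simps)
      show ?thesis unfolding e qq by simp
    qed
    ultimately show "0 \<le> t * (inner y v - f0 + inner x0 (y - x0) + inner u0 (v - u0))
        + t\<^sup>2 * (((norm (y - x0))\<^sup>2 + (norm (v - u0))\<^sup>2) / 2)"
      unfolding f0_def by (simp add: algebra_simps)
  qed
  have lf: "inner x0 u0 \<le> f0" by (rule lower[OF P0])
  have sq: "(norm (x0 + u0))\<^sup>2 = (norm x0)\<^sup>2 + (norm u0)\<^sup>2 + 2 * inner x0 u0"
    by (simp add: power2_norm_eq_inner inner_add_left inner_add_right inner_commute[of u0 x0])
  have key: "inner (y + u0) (v + x0) \<ge> (norm (x0 + u0))\<^sup>2" if yv: "(y,v) \<in> G" for y v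
  proof -
    have "inner (y + u0) (v + x0) = inner y v + inner x0 y + inner u0 v + inner x0 u0"
      by (simp add: inner_add_left inner_add_right inner_commute)
    moreover have "inner x0 (y - x0) = inner x0 y - (norm x0)\<^sup>2" "inner u0 (v - u0) = inner u0 v - (norm u0)\<^sup>2"
      by (simp_all add: inner_diff_right power2_norm_eq_inner)
    ultimately show ?thesis using var[OF yv] lf sq by linarith
  qed
  have G1: "(- u0, - x0) \<in> G"
  proof (rule ext)
    fix y v assume "(y,v) \<in> G"
    from key[OF this] have "0 \<le> inner (y + u0) (v + x0)" using zero_le_power2[of "norm (x0 + u0)"] by linarith
    moreover have "inner (- u0 - y) (- x0 - v) = inner (y + u0) (v + x0)"
      by (simp add: inner_diff_left inner_diff_right inner_add_left inner_add_right algebra_simps)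
    ultimately show "0 \<le> inner (- u0 - y) (- x0 - v)" by simp
  qed
  have "(norm (x0 + u0))\<^sup>2 \<le> 0" using key[OF G1] by simp
  hence "norm (x0 + u0) = 0" by simp
  hence "x0 + u0 = 0" by simp
  hence "u0 = - x0" by (simp add: add_eq_0_iff)
  thus ?thesis using G1 by auto
qed


lemma max_ext:
  assumes M: "maximally_monotone_op A"
    and h: "\<And>y v. v \<in> A y \<Longrightarrow> inner (x - y) (u - v) \<ge> 0"
  shows "u \<in> A x"
proof -
  define B where "B = A(x := insert u (A x))"
  have mA: "monotone_op A" using M unfolding maximally_monotone_op_def by simp
  have "monotone_op B" unfolding monotone_op_def
  proof (intro allI impI)
    fix x1 y1 u1 v1 assume u1: "u1 \<in> B x1" and v1: "v1 \<in> B y1"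
    show "0 \<le> inner (x1 - y1) (u1 - v1)"
    proof (cases "x1 = x \<and> u1 = u")
      case True
      show ?thesis
      proof (cases "y1 = x \<and> v1 = u")
        case True2: True
        thus ?thesis using True by simp
      next
        case False
        hence "v1 \<in> A y1" using v1 unfolding B_def by (auto split: if_splits)
        thus ?thesis using h True by auto
      qed
    next
      case False
      hence u1A: "u1 \<in> A x1" using u1 unfolding B_def by (auto split: if_splits)
      show ?thesis
      proof (cases "y1 = x \<and> v1 = u")
        case True
        have "0 \<le> inner (x - x1) (u - u1)" using h[OF u1A] .
        moreover have "inner (x1 - y1) (u1 - v1) = inner (x - x1) (u - u1)"
          using True by (simp add: inner_diff_left inner_diff_right algebra_simps)
        ultimately show ?thesis by simp
      next
        case False
        hence "v1 \<in> A y1" using v1 unfolding B_def by (auto split: if_splits)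
        thus ?thesis using mA u1A unfolding monotone_op_def by blast
      qed
    qed
  qed
  moreover have "\<forall>z. A z \<subseteq> B z" unfolding B_def by auto
  ultimately have "B = A" using M unfolding maximally_monotone_op_def by blast
  moreover have "u \<in> B x" unfolding B_def by simp
  ultimately show ?thesis by simp
qed

lemma resolvent_ok:
  fixes A :: "'a::{real_inner,complete_space} \<Rightarrow> 'a set"
  assumes M: "maximally_monotone_op A" and g: "0 < g"
  shows "z - resolvent g A z \<in> (\<lambda>u. g *\<^sub>R u) ` A (resolvent g A z)"
proof -
  have mA: "monotone_op A" using M unfolding maximally_monotone_op_def by simp
  define G where "G = {(y - z, g *\<^sub>R v) | y v. v \<in> A y}"
  have "\<exists>x. (x, -x) \<in> G"
  proof (rule minty_core)
    fix y v y' v' assume "(y,v) \<in> G" "(y',v') \<in> G"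
    then obtain y1 v1 y2 v2 where "y = y1 - z" "v = g *\<^sub>R v1" "v1 \<in> A y1" "y' = y2 - z" "v' = g *\<^sub>R v2" "v2 \<in> A y2"
      unfolding G_def by blast
    moreover have "0 \<le> inner (y1 - y2) (v1 - v2)" using mA \<open>v1 \<in> A y1\<close> \<open>v2 \<in> A y2\<close>
      unfolding monotone_op_def by blast
    ultimately show "0 \<le> inner (y - y') (v - v')"
      using g by (simp add: scaleR_diff_right[symmetric])
  next
    fix x u assume h: "\<And>y v. (y,v) \<in> G \<Longrightarrow> 0 \<le> inner (x - y) (u - v)"
    have "(1/g) *\<^sub>R u \<in> A (x + z)"
    proof (rule max_ext[OF M])
      fix y v assume "v \<in> A y"
      hence "(y - z, g *\<^sub>R v) \<in> G" unfolding G_def by blast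
      from h[OF this] have "0 \<le> inner (x + z - y) (u - g *\<^sub>R v)" by (simp add: algebra_simps)
      moreover have "u - g *\<^sub>R v = g *\<^sub>R ((1/g) *\<^sub>R u - v)" using g by (simp add: algebra_simps)
      ultimately have "0 \<le> g * inner (x + z - y) ((1/g) *\<^sub>R u - v)" by simp
      thus "0 \<le> inner (x + z - y) ((1/g) *\<^sub>R u - v)" using g by (simp add: zero_le_mult_iff)
    qed
    hence "((x + z) - z, g *\<^sub>R ((1/g) *\<^sub>R u)) \<in> G" unfolding G_def by blast
    thus "(x,u) \<in> G" using g by simp
  qed
  then obtain x where "(x, -x) \<in> G" by blast
  then obtain y v where yv: "x = y - z" "- x = g *\<^sub>R v" "v \<in> A y" unfolding G_def by blast
  have ex: "z - y \<in> (\<lambda>u. g *\<^sub>R u) ` A y" using yv by auto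
  have uniq: "p = y" if hp: "z - p \<in> (\<lambda>u. g *\<^sub>R u) ` A p" for p
  proof -
    obtain w where w: "w \<in> A p" "z - p = g *\<^sub>R w" using hp by blast
    have "0 \<le> inner (p - y) (w - v)" using mA w(1) yv(3) unfolding monotone_op_def by blast
    moreover have "w - v = (1/g) *\<^sub>R (y - p)"
    proof -
      have "g *\<^sub>R (w - v) = g *\<^sub>R w - g *\<^sub>R v" by (simp add: scaleR_diff_right)
      also have "\<dots> = (z - p) + x" using w(2)[symmetric] yv(2)[symmetric] by simp
      also have "\<dots> = y - p" using yv(1) by simp
      finally have "g *\<^sub>R (w - v) = y - p" .
      hence "(1/g) *\<^sub>R (g *\<^sub>R (w - v)) = (1/g) *\<^sub>R (y - p)" by simp
      thus ?thesis using g by simp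
    qed
    ultimately have "0 \<le> (1/g) * inner (p - y) (y - p)" by simp
    hence "0 \<le> inner (p - y) (y - p)" using g by (simp add: zero_le_divide_iff)
    moreover have "inner (p - y) (y - p) = - (norm (p - y))\<^sup>2"
      by (metis inner_minus_right minus_diff_eq power2_norm_eq_inner)
    ultimately have "norm (p - y) = 0" by simp
    thus ?thesis by simp
  qed
  have "resolvent g A z = y" unfolding resolvent_def
    by (rule the_equality[where P="\<lambda>p. z - p \<in> (\<lambda>u. g *\<^sub>R u) ` A p", OF ex uniq])
  thus ?thesis using ex by simp
qed

lemma lipschitz_maximal:
  fixes A1 :: "'a::real_inner \<Rightarrow> 'a"
  assumes mo: "monotone_op (\<lambda>x. {A1 x})" and L: "L-lipschitz_on UNIV A1"
  shows "maximally_monotone_op (\<lambda>x. {A1 x})"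
  unfolding maximally_monotone_op_def
proof (intro conjI allI impI mo)
  fix B assume hB: "monotone_op B \<and> (\<forall>x. {A1 x} \<subseteq> B x)"
  have L0: "0 \<le> L" using L by (rule lipschitz_on_nonneg)
  have "B x = {A1 x}" for x
  proof
    show "{A1 x} \<subseteq> B x" using hB by blast
    show "B x \<subseteq> {A1 x}"
    proof
      fix u assume u: "u \<in> B x"
      define w where "w = A1 x - u"
      define t where "t = 1 / (L + 1)"
      have t0: "0 < t" unfolding t_def using L0 by simp
      have "A1 (x - t *\<^sub>R w) \<in> B (x - t *\<^sub>R w)" using hB by blast
      hence "0 \<le> inner (x - (x - t *\<^sub>R w)) (u - A1 (x - t *\<^sub>R w))"
        using hB u unfolding monotone_op_def by blast
      hence "0 \<le> t * inner w (u - A1 (x - t *\<^sub>R w))" by simp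
      hence i1: "0 \<le> inner w (u - A1 (x - t *\<^sub>R w))" using t0 by (simp add: zero_le_mult_iff)
      have "dist (A1 (x - t *\<^sub>R w)) (A1 x) \<le> L * dist (x - t *\<^sub>R w) x"
        by (rule lipschitz_onD[OF L]) auto
      hence lip: "norm (A1 (x - t *\<^sub>R w) - A1 x) \<le> L * t * norm w" using t0 by (simp add: dist_norm)
      have "inner w (u - A1 (x - t *\<^sub>R w)) = - (norm w)\<^sup>2 + inner w (A1 x - A1 (x - t *\<^sub>R w))"
        unfolding w_def by (simp add: inner_diff_right power2_norm_eq_inner algebra_simps)
      moreover have "inner w (A1 x - A1 (x - t *\<^sub>R w)) \<le> norm w * (L * t * norm w)"
      proof -
        have "inner w (A1 x - A1 (x - t *\<^sub>R w)) \<le> norm w * norm (A1 x - A1 (x - t *\<^sub>R w))"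
          by (rule Cauchy_Schwarz_ineq2[THEN order_trans[OF abs_ge_self]])
        also have "\<dots> \<le> norm w * (L * t * norm w)"
          using lip by (intro mult_left_mono) (auto simp: norm_minus_commute)
        finally show ?thesis .
      qed
      ultimately have "(norm w)\<^sup>2 \<le> L * t * (norm w)\<^sup>2" using i1 by (simp add: power2_eq_square algebra_simps)
      moreover have "L * t < 1" unfolding t_def using L0 by (simp add: field_simps)
      ultimately have "(norm w)\<^sup>2 * (1 - L * t) \<le> 0" by (simp add: algebra_simps)
      hence "(norm w)\<^sup>2 \<le> 0" using \<open>L * t < 1\<close> by (simp add: mult_le_0_iff)
      hence "w = 0" by simp
      thus "u \<in> {A1 x}" unfolding w_def by simp
    qed
  qed
  thus "B = (\<lambda>x. {A1 x})" by auto
qed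

theorem lemma4p4:
  fixes A1 :: "'a::{real_inner, complete_space} \<Rightarrow> 'a"
    and A2 :: "'a \<Rightarrow> 'a set"
    and L \<mu> a b :: real
  assumes "monotone_op (\<lambda>x. {A1 x})"
    and "L-lipschitz_on UNIV A1"
    and "\<mu> > 0"
    and "maximally_monotone_op A2"
    and "strongly_monotone_op \<mu> A2"
    and "0 < a" and "a \<le> b"
  shows "\<exists>\<beta>. 0 \<le> \<beta> \<and> \<beta> < 1 \<and>
           (\<forall>\<gamma>\<in>{a..b}. is_contraction \<beta>
              (\<lambda>x. x - resolvent \<gamma> (\<lambda>y. {A1 y}) x
                   + resolvent \<gamma> A2 (2 *\<^sub>R resolvent \<gamma> (\<lambda>y. {A1 y}) x - x)))"
proof -
  note mo = assms(1) and Lip = assms(2) and mu = assms(3) and M2 = assms(4) and sm = assms(5)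
    and a = assms(6) and ab = assms(7)
  have L0: "0 \<le> L" using Lip by (rule lipschitz_on_nonneg)
  have M1: "maximally_monotone_op (\<lambda>x. {A1 x})" by (rule lipschitz_maximal[OF mo Lip])
  define K where "K = (1 + b * L)\<^sup>2 * (2 + 1 / (a * \<mu>))"
  have K1: "K \<ge> 1"
  proof -
    have "(1 + b * L)\<^sup>2 \<ge> 1" using a ab L0 by (simp add: one_le_power)
    moreover have "2 + 1 / (a * \<mu>) \<ge> 1" using a mu by simp
    ultimately have "1 * 1 \<le> (1 + b * L)\<^sup>2 * (2 + 1 / (a * \<mu>))" by (intro mult_mono) auto
    thus ?thesis unfolding K_def by simp
  qed
  define \<beta> where "\<beta> = sqrt (1 - 1 / K)"
  have b0: "0 \<le> \<beta>" unfolding \<beta>_def using K1 by simp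
  have b1: "\<beta> < 1" unfolding \<beta>_def using K1 by (simp add: real_sqrt_lt_1_iff)
  have "is_contraction \<beta> (\<lambda>x. x - resolvent g (\<lambda>y. {A1 y}) x
                   + resolvent g A2 (2 *\<^sub>R resolvent g (\<lambda>y. {A1 y}) x - x))" if g: "g \<in> {a..b}" for g
    unfolding is_contraction_def
  proof (intro allI)
    fix x x' :: 'a
    have g0: "0 < g" using g a by simp
    define p where "p = resolvent g (\<lambda>y. {A1 y}) x"
    define p' where "p' = resolvent g (\<lambda>y. {A1 y}) x'"
    define q where "q = resolvent g A2 (2 *\<^sub>R p - x)"
    define q' where "q' = resolvent g A2 (2 *\<^sub>R p' - x')"
    have hp: "x - p = g *\<^sub>R A1 p" using resolvent_ok[OF M1 g0, of x] unfolding p_def by simp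
    have hp': "x' - p' = g *\<^sub>R A1 p'" using resolvent_ok[OF M1 g0, of x'] unfolding p'_def by simp
    obtain w where w: "w \<in> A2 q" "(2 *\<^sub>R p - x) - q = g *\<^sub>R w"
      using resolvent_ok[OF M2 g0, of "2 *\<^sub>R p - x"] unfolding q_def by blast
    obtain w' where w': "w' \<in> A2 q'" "(2 *\<^sub>R p' - x') - q' = g *\<^sub>R w'"
      using resolvent_ok[OF M2 g0, of "2 *\<^sub>R p' - x'"] unfolding q'_def by blast
    define dp where "dp = p - p'"
    define da where "da = A1 p - A1 p'"
    define dq where "dq = q - q'"
    have xe: "x = g *\<^sub>R A1 p + p" by (metis hp diff_add_cancel)
    have xe': "x' = g *\<^sub>R A1 p' + p'" by (metis hp' diff_add_cancel)
    have x_eq: "x - x' = dp + g *\<^sub>R da" unfolding dp_def da_def xe xe'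
      by (simp add: algebra_simps)
    have T_eq: "(x - p + q) - (x' - p' + q') = g *\<^sub>R da + dq" unfolding da_def dq_def hp hp'
      by (simp add: algebra_simps)
    have h1: "inner dp da \<ge> 0" using mo unfolding monotone_op_def dp_def da_def by blast
    have h2: "norm da \<le> L * norm dp" using lipschitz_onD[OF Lip] unfolding da_def dp_def by (simp add: dist_norm)
    have dw: "g *\<^sub>R (w - w') = dp - g *\<^sub>R da - dq"
    proof -
      have "g *\<^sub>R (w - w') = ((2 *\<^sub>R p - x) - q) - ((2 *\<^sub>R p' - x') - q')"
        using w(2) w'(2) by (simp add: algebra_simps)
      also have "\<dots> = dp - g *\<^sub>R da - dq"
        unfolding dp_def da_def dq_def xe xe' by (simp add: algebra_simps scaleR_diff_right scaleR_2)
      finally show ?thesis .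
    qed
    have "inner dq (w - w') \<ge> \<mu> * (norm dq)\<^sup>2"
      using sm w(1) w'(1) unfolding strongly_monotone_op_def dq_def by blast
    hence h3: "inner dq (dp - g *\<^sub>R da - dq) \<ge> g * \<mu> * (norm dq)\<^sup>2"
      unfolding dw[symmetric] using g0 by (simp add: mult_left_mono)
    have main: "(norm (g *\<^sub>R da + dq))\<^sup>2 \<le> (1 - 1 / K) * (norm (dp + g *\<^sub>R da))\<^sup>2"
      unfolding K_def by (rule key_alg[OF g0 _ _ a mu L0 h1 h2 h3]) (use g in auto)
    have "norm (g *\<^sub>R da + dq) \<le> \<beta> * norm (dp + g *\<^sub>R da)"
    proof -
      have "norm (g *\<^sub>R da + dq) = sqrt ((norm (g *\<^sub>R da + dq))\<^sup>2)" by simp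
      also have "\<dots> \<le> sqrt ((1 - 1 / K) * (norm (dp + g *\<^sub>R da))\<^sup>2)" using main by (rule real_sqrt_le_mono)
      also have "\<dots> = \<beta> * norm (dp + g *\<^sub>R da)" unfolding \<beta>_def by (simp add: real_sqrt_mult)
      finally show ?thesis .
    qed
    thus "norm ((x - resolvent g (\<lambda>y. {A1 y}) x + resolvent g A2 (2 *\<^sub>R resolvent g (\<lambda>y. {A1 y}) x - x))
        - (x' - resolvent g (\<lambda>y. {A1 y}) x' + resolvent g A2 (2 *\<^sub>R resolvent g (\<lambda>y. {A1 y}) x' - x')))
        \<le> \<beta> * norm (x - x')"
      using T_eq x_eq unfolding p_def p'_def q_def q'_def by simp
  qed
  thus ?thesis using b0 b1 by blast
qed

end
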